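(* For $n\ge1$ and $k\ge1$, the number of plane trees with $n$ edges and exactly $k$ old leaves is $$\frac{2^{n-2k+1}}{k}\binom{n-1}{2k-2}\binom{2k-2}{k-1}.$$
   Context: A plane tree is a rooted tree in which the children of each vertex are linearly ordered (left to right). A leaf is a vertex with no children; by convention the tree consisting of a single vertex (no edges) has no leaves. A leaf is an old leaf if it is the leftmost child of its parent, and a young leaf otherwise. *)

theory Defs
  imports Complex_Main
begin

datatype ptree = Node "ptree list"

fun edges :: "ptree \<Rightarrow> nat" where
  "edges (Node cs) = length cs + sum_list (map edges cs)"

text \<open>Number of old leaves: leaves that are the leftmost child of their parent.
  The single-vertex tree has no leaves (it is never a child), so it has no old leaves.\<close>
fun old_leaves :: "ptree \<Rightarrow> nat" where
  "old_leaves (Node cs) =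
     (case cs of [] \<Rightarrow> 0 | c # _ \<Rightarrow> (if c = Node [] then 1 else 0))
     + sum_list (map old_leaves cs)"

end

theory Submission
  imports Defs
begin


fun P :: "nat \<Rightarrow> nat \<Rightarrow> nat" where
  "P 0 s = 1"
| "P (Suc L) 0 = 0"
| "P (Suc L) (Suc s) = 2 * P L (Suc s) + P (Suc L) s"

function Bal :: "nat \<Rightarrow> nat \<Rightarrow> nat" where
  "Bal h 0 = 1"
| "Bal 0 (Suc d) = 0"
| "Bal (Suc h) (Suc d) = Bal h (Suc d) + Bal (Suc (Suc h)) d"
  by pat_completeness auto
termination by (relation "measure (\<lambda>(h,d). h + 2*d)") auto

definition R :: "nat \<Rightarrow> nat \<Rightarrow> nat \<Rightarrow> nat" where
  "R n k h = (if h \<le> k \<and> 2*k - h \<le> n then P (n - (2*k-h)) (2*k-h) * Bal h (k-h) else 0)"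

lemma R_0: "R 0 k h = (if h = 0 \<and> k = 0 then 1 else 0)"
  by (auto simp: R_def)

lemma R_Suc_0: "R (Suc n) k 0 = 0"
  by (cases k) (auto simp: R_def)

lemma R_Suc_Suc: "R (Suc n) k (Suc h) = (if k = 0 then 0 else R n (k-1) h) + 2 * R n k (Suc h) + R n k (Suc (Suc h))"
proof (cases "Suc h \<le> k")
  case False
  then show ?thesis by (auto simp: R_def)
next
  case True
  then obtain d where k: "k = Suc h + d" by (metis le_add_diff_inverse)
  show ?thesis
  proof (cases "Suc n < Suc h + 2*d")
    case True
    then show ?thesis using k by (auto simp: R_def)
  next
    case False
    then obtain L where n: "Suc n = Suc h + 2*d + L" by (metis le_add_diff_inverse not_less)
    have L1: "R (Suc n) k (Suc h) = P L (Suc (h+2*d)) * Bal (Suc h) d"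
      using n k by (simp add: R_def)
    have L2: "R n (k-1) h = P L (h+2*d) * Bal h d"
      using n k by (simp add: R_def)
    have L3: "R n k (Suc h) = (case L of 0 \<Rightarrow> 0 | Suc L' \<Rightarrow> P L' (Suc (h+2*d)) * Bal (Suc h) d)"
      using n k by (cases L) (auto simp: R_def)
    have L4: "R n k (Suc (Suc h)) = (case d of 0 \<Rightarrow> 0 | Suc d' \<Rightarrow> P L (h+2*d) * Bal (Suc (Suc h)) d')"
      using n k by (cases d) (auto simp: R_def)
    show ?thesis
      unfolding L1 L2 L3 L4 using k
      by (cases L; cases d) (auto simp: algebra_simps)
  qed
qed



lemma P_closed: "P L (Suc s) = 2^L * ((L+s) choose L)"
proof (induction L arbitrary: s)
  case 0 then show ?case by simp
next
  case (Suc L)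
  note IH = Suc.IH
  show ?case
  proof (induction s)
    case 0 then show ?case using IH by simp
  next
    case (Suc s)
    then show ?case using IH[of "Suc s"] by (simp add: algebra_simps)
  qed
qed

lemma Bal_closed: "h \<ge> 1 \<Longrightarrow> int (Bal h d) = int ((h+2*d-1) choose d) - (if d = 0 then 0 else int ((h+2*d-1) choose (d-1)))"
proof (induction h d rule: Bal.induct)
  case (1 h) then show ?case by simp
next
  case (2 d) then show ?case by simp
next
  case (3 h d)
  show ?case
  proof (cases "h = 0")
    case True
    have sym: "(Suc (2*d)) choose (Suc d) = (Suc (2*d)) choose d"
      using binomial_symmetric[of d "Suc (2*d)"] by simp
    show ?thesis using 3(2) True sym
      by (cases d) (auto simp: algebra_simps)
  next
    case False
    show ?thesis using 3(1) 3(2) False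
      by (cases d) (auto simp: algebra_simps)
  qed
qed



fun kids :: "ptree \<Rightarrow> ptree list" where "kids (Node cs) = cs"

definition S :: "nat \<Rightarrow> nat \<Rightarrow> nat \<Rightarrow> ptree list set" where
  "S n k h = {ts. length ts = h \<and> (\<forall>t\<in>set ts. t \<noteq> Node []) \<and>
     sum_list (map edges ts) = n \<and> sum_list (map old_leaves ts) = k}"

lemma edges_pos: "t \<noteq> Node [] \<Longrightarrow> edges t \<ge> 1"
  by (cases t) (auto simp: neq_Nil_conv)

lemma S_0: "S 0 k h = (if h = 0 \<and> k = 0 then {[]} else {})"
proof -
  have "ts = []" if "ts \<in> S 0 k h" for ts
  proof (cases ts)
    case (Cons t r)
    then show ?thesis using that edges_pos[of t] by (auto simp: S_def)
  qed
  then have sub: "S 0 k h \<subseteq> {[]}" by blast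
  have "[] \<in> S 0 k h \<longleftrightarrow> h = 0 \<and> k = 0" by (auto simp: S_def)
  then show ?thesis using sub by auto
qed

lemma S_Suc_0: "S (Suc n) k 0 = {}"
  by (auto simp: S_def)

definition f1 where "f1 r = Node [Node []] # r"
definition f2 where "f2 ts = Node [hd ts] # tl ts"
definition f3 where "f3 ts = Node (kids (hd ts) @ [Node []]) # tl ts"
definition f4 where "f4 ts = Node (kids (hd ts) @ [hd (tl ts)]) # tl (tl ts)"

lemma old_app: "cs \<noteq> [] \<Longrightarrow> old_leaves (Node (cs @ [c])) = old_leaves (Node cs) + old_leaves c"
  by (cases cs) auto

lemma S_Suc_Suc: "S (Suc n) k (Suc h) =
   (if k = 0 then {} else f1 ` S n (k-1) h) \<union> f2 ` S n k (Suc h) \<union> f3 ` S n k (Suc h)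
   \<union> f4 ` S n k (Suc (Suc h))"
  (is "?L = ?R")
proof
  show "?L \<subseteq> ?R"
  proof
    fix ts assume ts: "ts \<in> ?L"
    then obtain t r where tr: "ts = t # r" by (cases ts) (auto simp: S_def)
    obtain cs where t: "t = Node cs" by (cases t)
    have "cs \<noteq> []" using ts tr t by (auto simp: S_def)
    then obtain cs' c where cs: "cs = cs' @ [c]" by (cases cs rule: rev_cases) auto
    show "ts \<in> ?R"
    proof (cases "cs' = []")
      case True
      show ?thesis
      proof (cases "c = Node []")
        case True
        then have "r \<in> S n (k-1) h" "k \<noteq> 0" "ts = f1 r"
          using ts tr t cs \<open>cs' = []\<close> by (auto simp: S_def f1_def)
        then show ?thesis by auto
      next
        case False
        then have "c # r \<in> S n k (Suc h)" "ts = f2 (c # r)"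
          using ts tr t cs \<open>cs' = []\<close> by (auto simp: S_def f2_def)
        then show ?thesis by blast
      qed
    next
      case False
      show ?thesis
      proof (cases "c = Node []")
        case True
        then have "Node cs' # r \<in> S n k (Suc h)" "ts = f3 (Node cs' # r)"
          using ts tr t cs \<open>cs' \<noteq> []\<close> old_app[OF \<open>cs' \<noteq> []\<close>, of c] by (auto simp: S_def f3_def)
        then show ?thesis by blast
      next
        case False
        then have "Node cs' # c # r \<in> S n k (Suc (Suc h))" "ts = f4 (Node cs' # c # r)"
          using ts tr t cs \<open>cs' \<noteq> []\<close> old_app[OF \<open>cs' \<noteq> []\<close>, of c] by (auto simp: S_def f4_def)
        then show ?thesis by blast
      qed
    qed
  qed
next
  show "?R \<subseteq> ?L"
  proof -
    have A1: "f1 r \<in> ?L" if "r \<in> S n (k-1) h" "k \<noteq> 0" for r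
      using that by (auto simp: S_def f1_def)
    have A2: "f2 ts \<in> ?L" if "ts \<in> S n k (Suc h)" for ts
    proof -
      have "length ts = Suc h" using that by (simp add: S_def)
      then obtain t r where tr: "ts = t # r" by (metis length_Suc_conv)
      show ?thesis using that tr by (auto simp: S_def f2_def)
    qed
    have A3: "f3 ts \<in> ?L" if "ts \<in> S n k (Suc h)" for ts
    proof -
      have "length ts = Suc h" using that by (simp add: S_def)
      then obtain t r where tr: "ts = t # r" by (metis length_Suc_conv)
      obtain cs where t: "t = Node cs" by (cases t)
      have "cs \<noteq> []" using that tr t by (auto simp: S_def)
      then show ?thesis using that tr t old_app[OF \<open>cs \<noteq> []\<close>, of "Node []"]
        by (auto simp: S_def f3_def)
    qed
    have A4: "f4 ts \<in> ?L" if "ts \<in> S n k (Suc (Suc h))" for ts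
    proof -
      have "length ts = Suc (Suc h)" using that by (simp add: S_def)
      then obtain t c r where tr: "ts = t # c # r"
        by (metis length_Suc_conv)
      obtain cs where t: "t = Node cs" by (cases t)
      have "cs \<noteq> []" using that tr t by (auto simp: S_def)
      then show ?thesis using that tr t old_app[OF \<open>cs \<noteq> []\<close>, of c]
        by (auto simp: S_def f4_def)
    qed
    show ?thesis using A1 A2 A3 A4 by (auto split: if_splits)
  qed
qed



definition cls :: "ptree list \<Rightarrow> bool \<times> bool" where
  "cls ts = (2 \<le> length (kids (hd ts)), last (kids (hd ts)) = Node [])"

lemma kids_ne: "t \<noteq> Node [] \<Longrightarrow> kids t \<noteq> []"
  by (cases t) auto

lemma node_kids: "Node (kids t) = t" by (cases t) auto

lemma kids_eq: "kids a = kids b \<longleftrightarrow> a = b" by (metis node_kids)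

lemma cls1: "cls (f1 r) = (False, True)" by (simp add: cls_def f1_def)
lemma cls2: "ts \<in> S n k (Suc h) \<Longrightarrow> cls (f2 ts) = (False, False)"
  by (cases ts) (auto simp: cls_def f2_def S_def)
lemma cls3: "ts \<in> S n k (Suc h) \<Longrightarrow> cls (f3 ts) = (True, True)"
  by (cases ts) (auto simp: cls_def f3_def S_def dest!: kids_ne simp: Suc_le_eq)
lemma cls4: "ts \<in> S n k (Suc (Suc h)) \<Longrightarrow> cls (f4 ts) = (True, False)"
  by (cases ts; cases "tl ts") (auto simp: cls_def f4_def S_def dest!: kids_ne simp: Suc_le_eq)

lemma inj2: "inj_on f2 (S n k (Suc h))"
proof (rule inj_onI)
  fix x y assume "x \<in> S n k (Suc h)" "y \<in> S n k (Suc h)" "f2 x = f2 y"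
  then show "x = y" by (cases x; cases y) (auto simp: f2_def S_def)
qed

lemma inj3: "inj_on f3 (S n k (Suc h))"
proof (rule inj_onI)
  fix x y assume "x \<in> S n k (Suc h)" "y \<in> S n k (Suc h)" "f3 x = f3 y"
  then show "x = y" by (cases x; cases y) (auto simp: f3_def S_def kids_eq)
qed

lemma inj4: "inj_on f4 (S n k (Suc (Suc h)))"
proof (rule inj_onI)
  fix x y assume a: "x \<in> S n k (Suc (Suc h))" "y \<in> S n k (Suc (Suc h))" "f4 x = f4 y"
  have "length x = Suc (Suc h)" "length y = Suc (Suc h)" using a by (auto simp: S_def)
  then obtain x1 x2 xr y1 y2 yr where "x = x1 # x2 # xr" "y = y1 # y2 # yr"
    by (metis length_Suc_conv)
  then show "x = y" using a(3) by (auto simp: f4_def) (metis node_kids)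
qed

lemma inj1: "inj f1" by (auto simp: inj_def f1_def)

lemma S_card: "finite (S n k h) \<and> card (S n k h) = R n k h"
proof (induction n arbitrary: k h)
  case 0 then show ?case by (simp add: S_0 R_0)
next
  case (Suc n)
  show ?case
  proof (cases h)
    case 0 then show ?thesis by (simp add: S_Suc_0 R_Suc_0)
  next
    case (Suc g)
    define A1 where "A1 = (if k = 0 then {} else f1 ` S n (k-1) g)"
    define A2 where "A2 = f2 ` S n k (Suc g)"
    define A3 where "A3 = f3 ` S n k (Suc g)"
    define A4 where "A4 = f4 ` S n k (Suc (Suc g))"
    have fin: "finite A1" "finite A2" "finite A3" "finite A4"
      using Suc.IH by (auto simp: A1_def A2_def A3_def A4_def)
    have c1: "card A1 = (if k = 0 then 0 else R n (k-1) g)"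
      using Suc.IH by (auto simp: A1_def card_image[OF inj_on_subset[OF inj1]])
    have c2: "card A2 = R n k (Suc g)"
      using Suc.IH unfolding A2_def by (simp add: card_image[OF inj2])
    have c3: "card A3 = R n k (Suc g)"
      using Suc.IH unfolding A3_def by (simp add: card_image[OF inj3])
    have c4: "card A4 = R n k (Suc (Suc g))"
      using Suc.IH unfolding A4_def by (simp add: card_image[OF inj4])
    have cA1: "\<forall>x\<in>A1. cls x = (False, True)" by (auto simp: A1_def cls1)
    have cA2: "\<forall>x\<in>A2. cls x = (False, False)" by (auto simp: A2_def cls2)
    have cA3: "\<forall>x\<in>A3. cls x = (True, True)" by (auto simp: A3_def cls3)
    have cA4: "\<forall>x\<in>A4. cls x = (True, False)" by (auto simp: A4_def cls4)
    have d1: "A1 \<inter> A2 = {}" using cA1 cA2 by fastforce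
    have d2: "(A1 \<union> A2) \<inter> A3 = {}" using cA1 cA2 cA3 by fastforce
    have d3: "(A1 \<union> A2 \<union> A3) \<inter> A4 = {}" using cA1 cA2 cA3 cA4 by fastforce
    have eq: "S (Suc n) k h = A1 \<union> A2 \<union> A3 \<union> A4"
      unfolding Suc S_Suc_Suc A1_def A2_def A3_def A4_def by simp
    have "card (S (Suc n) k h) = card A1 + card A2 + card A3 + card A4"
      unfolding eq using fin d1 d2 d3
      by (simp add: card_Un_disjoint)
    also have "\<dots> = R (Suc n) k h"
      unfolding c1 c2 c3 c4 Suc R_Suc_Suc by simp
    finally show ?thesis using eq fin by simp
  qed
qed



lemma cat_id: "(Suc i + 1) * ((2 * Suc i) choose i) = ((2 * Suc i) choose Suc i) * Suc i"
proof -
  have a: "(2*Suc i - i) * ((2*Suc i) choose i) = (2*Suc i) * ((2*Suc i - 1) choose i)"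
    by (rule binomial_absorb_comp)
  have b: "Suc (2*i+1) * ((2*i+1) choose i) = (Suc (2*i+1) choose Suc i) * Suc i"
    by (rule Suc_times_binomial_eq)
  have "2*Suc i - i = Suc i + 1" "2*Suc i - 1 = 2*i+1" "Suc (2*i+1) = 2 * Suc i" by auto
  then show ?thesis using a b by (simp del: binomial_Suc_Suc)
qed

lemma Bal1: "real (Bal 1 j) * (real j + 1) = real ((2*j) choose j)"
proof -
  have c: "int (Bal 1 j) = int ((2*j) choose j) - (if j = 0 then 0 else int ((2*j) choose (j-1)))"
    using Bal_closed[of 1 j] by simp
  show ?thesis
  proof (cases j)
    case 0 then show ?thesis using c by simp
  next
    case (Suc i)
    have ci: "(Suc i + 1) * ((2 * Suc i) choose i) = ((2 * Suc i) choose Suc i) * Suc i"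
      by (rule cat_id)
    define X where "X = real ((2 * Suc i) choose Suc i)"
    define Y where "Y = real ((2 * Suc i) choose i)"
    have c': "int (Bal 1 j) = int ((2 * Suc i) choose Suc i) - int ((2 * Suc i) choose i)"
      using c Suc by simp
    have B: "real (Bal 1 j) = X - Y"
    proof -
      have "real_of_int (int (Bal 1 j)) = real_of_int (int ((2 * Suc i) choose Suc i) - int ((2 * Suc i) choose i))"
        using c' by (simp only:)
      then show ?thesis unfolding X_def Y_def by (simp del: binomial_Suc_Suc)
    qed
    have XY: "(real i + 2) * Y = X * (real i + 1)"
    proof -
      have "real ((Suc i + 1) * ((2 * Suc i) choose i)) = real (((2 * Suc i) choose Suc i) * Suc i)"
        using ci by (simp only:)
      then show ?thesis unfolding X_def Y_def by (simp add: algebra_simps del: binomial_Suc_Suc)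
    qed
    have "real (Bal 1 j) * (real j + 1) = (X - Y) * (real i + 2)" using B Suc by simp
    also have "\<dots> = X" using XY by (simp add: algebra_simps)
    finally show ?thesis unfolding X_def using Suc by simp
  qed
qed

theorem mainTheorem3:
  fixes n k :: nat
  assumes "n \<ge> 1" and "k \<ge> 1"
  shows "finite {t. edges t = n \<and> old_leaves t = k}
    \<and> real (card {t. edges t = n \<and> old_leaves t = k})
      = (2::real) powi (int n - 2 * int k + 1) / real k
        * real ((n - 1) choose (2 * k - 2)) * real ((2 * k - 2) choose (k - 1))"
proof -
  let ?T = "{t. edges t = n \<and> old_leaves t = k}"
  have eqT: "?T = hd ` S n k 1"
  proof
    show "?T \<subseteq> hd ` S n k 1"
    proof
      fix t assume t: "t \<in> ?T"
      then have "t \<noteq> Node []" using assms by auto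
      then have "[t] \<in> S n k 1" using t by (simp add: S_def)
      then show "t \<in> hd ` S n k 1" by force
    qed
  next
    show "hd ` S n k 1 \<subseteq> ?T"
    proof
      fix t assume "t \<in> hd ` S n k 1"
      then obtain ts where ts: "ts \<in> S n k 1" "t = hd ts" by auto
      then have "length ts = 1" by (simp add: S_def)
      then obtain u where "ts = [u]" by (metis One_nat_def length_0_conv length_Suc_conv)
      then show "t \<in> ?T" using ts by (simp add: S_def)
    qed
  qed
  have inj: "inj_on hd (S n k 1)"
  proof (rule inj_onI)
    fix x y assume a: "x \<in> S n k 1" "y \<in> S n k 1" "hd x = hd y"
    have "length x = 1" "length y = 1" using a by (auto simp: S_def)
    then show "x = y" using a(3)
      by (metis One_nat_def length_0_conv length_Suc_conv list.sel(1))
  qed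
  have fin: "finite ?T" using S_card eqT by auto
  have card: "card ?T = R n k 1" using S_card[of n k 1] eqT card_image[OF inj] by simp
  obtain j where k: "k = Suc j" using assms by (cases k) auto
  show ?thesis
  proof (cases "2*k - 1 \<le> n")
    case False
    then have "R n k 1 = 0" by (simp add: R_def)
    moreover have c0: "(n - 1) choose (2 * k - 2) = 0" using False assms by (intro binomial_eq_0) linarith
    ultimately have c1: "card ?T = 0" using card by simp
    have rhs0: "(2::real) powi (int n - 2 * int k + 1) / real k
        * real ((n - 1) choose (2 * k - 2)) * real ((2 * k - 2) choose (k - 1)) = 0"
      unfolding c0 by simp
    show ?thesis unfolding rhs0 c1 using fin by simp
  next
    case True
    define L where "L = n - (2*j+1)"
    have n: "n = L + 2*j + 1" using True k L_def by simp
    have R1: "R n k 1 = P L (Suc (2*j)) * Bal 1 j"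
      using n k by (simp add: R_def)
    have P1: "P L (Suc (2*j)) = 2^L * ((n-1) choose (2*j))"
      using P_closed[of L "2*j"] n binomial_symmetric[of "2*j" "L+2*j"] by simp
    have pw: "(2::real) powi (int n - 2 * int k + 1) = 2 ^ L"
    proof -
      have "int n - 2 * int k + 1 = int L" using n k by simp
      then show ?thesis by (simp add: power_int_of_nat)
    qed
    have "real (card ?T) = 2^L * real ((n-1) choose (2*j)) * real (Bal 1 j)"
      using card R1 P1 by simp
    also have "\<dots> = 2^L * real ((n-1) choose (2*j)) * real ((2*j) choose j) / (real j + 1)"
    proof -
      have "real (Bal 1 j) = real ((2*j) choose j) / (real j + 1)"
        using Bal1[of j] by (simp add: eq_divide_eq del: Bal.simps)
      then show ?thesis by simp
    qed
    also have "\<dots> = (2::real) powi (int n - 2 * int k + 1) / real k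
        * real ((n - 1) choose (2 * k - 2)) * real ((2 * k - 2) choose (k - 1))"
      unfolding pw using k by simp
    finally show ?thesis using fin by simp
  qed
qed

end
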